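(* Let $\overline Y$ be a balanced real random variable whose support has at most two points, and let $y_1,y_2$ be independent copies of $\overline Y$. Then for all real numbers $x_1,x_2$, \[ \mathbb{E}_{y_1,y_2}\big(|x_1+y_1|-|x_2+y_2|\big)^2 \;\ge\; \frac14\big(|x_1|-|x_2|\big)^2 . \]
   Context: A random variable is balanced if it has expectation $0$. *)

theory Defs
  imports "HOL-Probability.Probability"
begin

end

theory Submission
  imports Defs
begin

definition SS :: "real\<Rightarrow>real\<Rightarrow>real\<Rightarrow>real\<Rightarrow>real\<Rightarrow>real\<Rightarrow>real" where
 "SS p q a b x1 x2 = p*p*(\<bar>x1+a\<bar>-\<bar>x2+a\<bar>)^2 + p*q*(\<bar>x1+a\<bar>-\<bar>x2+b\<bar>)^2
    + q*p*(\<bar>x1+b\<bar>-\<bar>x2+a\<bar>)^2 + q*q*(\<bar>x1+b\<bar>-\<bar>x2+b\<bar>)^2"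

lemma sq_aux:
  fixes s t d :: real
  assumes "t \<ge> d - s" "s \<ge> 0" "d \<ge> 0"
  shows "s^2 + t^2 \<ge> d^2/4"
proof (cases "s \<ge> d/2")
  case True
  then have "(d/2)^2 \<le> s^2" using assms by (intro power_mono) auto
  then show ?thesis by (simp add: power_divide) (smt (verit) zero_le_power2)
next
  case False
  then have "(d/2)^2 \<le> t^2" using assms by (intro power_mono) auto
  then show ?thesis by (simp add: power_divide) (smt (verit) zero_le_power2)
qed

lemma core:
  fixes p q a b x1 x2 :: real
  assumes p: "p \<ge> 0" and q: "q \<ge> 0" and pq: "p + q = 1" and a: "a \<le> 0" and b: "0 \<le> b"
    and bal: "p*a + q*b = 0" and x1: "x1 \<ge> 0" and x12: "\<bar>x2\<bar> \<le> x1"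
  shows "SS p q a b x1 x2 \<ge> (x1 - \<bar>x2\<bar>)^2/4"
proof -
  define d where "d = x1 - \<bar>x2\<bar>"
  have d: "d \<ge> 0" using x12 d_def by simp
  show ?thesis
  proof (cases "x1 < -a")
    case True
    have e1: "(\<bar>x1+a\<bar>-\<bar>x2+a\<bar>)^2 = (x1-x2)^2" 
    proof -
      have "\<bar>x1+a\<bar> = -(x1+a)" "\<bar>x2+a\<bar> = -(x2+a)" using True x12 by auto
      thus ?thesis by (simp add: power2_commute)
    qed
    have "d^2 \<le> (x1-x2)^2" using d unfolding d_def by (intro power_mono) auto
    hence A: "d^2 \<le> (\<bar>x1+a\<bar>-\<bar>x2+a\<bar>)^2" using e1 by simp
    have "d^2 \<le> (\<bar>x1+b\<bar>-\<bar>x2+b\<bar>)^2" using d b x1 unfolding d_def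
      by (intro power_mono) (auto simp: abs_if)
    hence B: "q*q*d^2 \<le> q*q*(\<bar>x1+b\<bar>-\<bar>x2+b\<bar>)^2" using q by (intro mult_left_mono) auto
    have A': "p*p*d^2 \<le> p*p*(\<bar>x1+a\<bar>-\<bar>x2+a\<bar>)^2" using A p by (intro mult_left_mono) auto
    have C: "0 \<le> p*q*(\<bar>x1+a\<bar>-\<bar>x2+b\<bar>)^2 + q*p*(\<bar>x1+b\<bar>-\<bar>x2+a\<bar>)^2" using p q by simp
    have D: "p*p + q*q \<ge> 1/2"
    proof -
      have "2*(p*p+q*q) = (p+q)^2 + (p-q)^2" by (simp add: power2_eq_square algebra_simps)
      hence "2*(p*p+q*q) \<ge> 1" using pq by simp
      thus ?thesis by simp
    qed
    have "(1/2)*d^2 \<le> (p*p+q*q)*d^2" using D by (intro mult_right_mono) auto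
    moreover have "0 \<le> d^2" by simp
    ultimately have "d^2/4 \<le> (p*p+q*q)*d^2" by linarith
    also have "\<dots> = p*p*d^2 + q*q*d^2" by (simp add: algebra_simps)
    also have "\<dots> \<le> SS p q a b x1 x2" using A' B C unfolding SS_def by linarith
    finally show ?thesis unfolding d_def .
  next
    case False
    have ra: "\<bar>x1+a\<bar> = x1+a" "\<bar>x1+b\<bar> = x1+b" using False b x1 by auto
    define ca where "ca = x1 - \<bar>x2+a\<bar>"
    define cb where "cb = x1 - \<bar>x2+b\<bar>"
    have gen: "p*(a+c)^2+q*(b+c)^2 = p*a^2+q*b^2 + c^2" for c
    proof -
      have "p*(a+c)^2+q*(b+c)^2 = p*a^2+q*b^2 + 2*c*(p*a+q*b) + (p+q)*c^2"
        by (simp add: power2_eq_square algebra_simps)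
      thus ?thesis using bal pq by simp
    qed
    have "SS p q a b x1 x2 = p*(p*(a+ca)^2+q*(b+ca)^2) + q*(p*(a+cb)^2+q*(b+cb)^2)"
      unfolding SS_def ra ca_def cb_def by (simp add: algebra_simps)
    also have "\<dots> = p*(p*a^2+q*b^2+ca^2) + q*(p*a^2+q*b^2+cb^2)"
      by (simp only: gen)
    also have "\<dots> = (p+q)*(p*a^2+q*b^2) + p*ca^2 + q*cb^2"
      by (simp add: algebra_simps)
    also have "\<dots> = p*(a^2 + ca^2) + q*(b^2 + cb^2)"
      using pq by (simp add: algebra_simps)
    finally have S: "SS p q a b x1 x2 = p*(a^2 + ca^2) + q*(b^2 + cb^2)" .
    have "ca \<ge> d - (-a)" unfolding ca_def d_def using abs_triangle_ineq[of x2 a] a by auto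
    hence "(-a)^2 + ca^2 \<ge> d^2/4" using a d by (intro sq_aux) auto
    hence ia: "a^2 + ca^2 \<ge> d^2/4" by simp
    have "cb \<ge> d - b" unfolding cb_def d_def using abs_triangle_ineq[of x2 b] b by auto
    hence ib: "b^2 + cb^2 \<ge> d^2/4" using b d by (intro sq_aux) auto
    have "d^2/4 = p*(d^2/4) + q*(d^2/4)" using pq by (metis distrib_right mult_1)
    also have "\<dots> \<le> p*(a^2 + ca^2) + q*(b^2 + cb^2)"
      using ia ib p q by (intro add_mono mult_left_mono) auto
    finally show ?thesis using S d_def by simp
  qed
qed

lemma SS_pq: "SS p q a b x1 x2 = SS q p b a x1 x2"
  unfolding SS_def by (simp add: algebra_simps)

lemma SS_x: "SS p q a b x1 x2 = SS p q a b x2 x1"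
  unfolding SS_def by (simp add: algebra_simps power2_commute)

lemma SS_neg: "SS p q a b (-x1) (-x2) = SS p q (-a) (-b) x1 x2"
proof -
  have "\<bar>- x + y\<bar> = \<bar>x + - y\<bar>" for x y :: real by linarith
  thus ?thesis unfolding SS_def by simp
qed

lemma G1:
  fixes p q a b x1 x2 :: real
  assumes p: "p \<ge> 0" and q: "q \<ge> 0" and pq: "p + q = 1" and a: "a \<le> 0" and b: "0 \<le> b"
    and bal: "p*a + q*b = 0" and x12: "\<bar>x2\<bar> \<le> \<bar>x1\<bar>"
  shows "SS p q a b x1 x2 \<ge> (\<bar>x1\<bar> - \<bar>x2\<bar>)^2/4"
proof (cases "x1 \<ge> 0")
  case True
  then show ?thesis using core[OF p q pq a b bal True] x12 by simp
next
  case False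
  have e: "SS p q a b x1 x2 = SS q p (-b) (-a) (-x1) (-x2)"
    using SS_neg[of p q "-a" "-b" x1 x2] SS_pq[of p q "-a" "-b" "-x1" "-x2"] by simp
  have "q + p = 1" using pq by simp
  moreover have "q*(-b) + p*(-a) = 0" using bal by simp
  ultimately have "SS q p (-b) (-a) (-x1) (-x2) \<ge> (-x1 - \<bar>-x2\<bar>)^2/4"
    using False x12 p q a b by (intro core) auto
  thus ?thesis using e False by simp
qed

lemma G2:
  fixes p q a b x1 x2 :: real
  assumes p: "p \<ge> 0" and q: "q \<ge> 0" and pq: "p + q = 1" and a: "a \<le> 0" and b: "0 \<le> b"
    and bal: "p*a + q*b = 0"
  shows "SS p q a b x1 x2 \<ge> (\<bar>x1\<bar> - \<bar>x2\<bar>)^2/4"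
proof (cases "\<bar>x2\<bar> \<le> \<bar>x1\<bar>")
  case True
  then show ?thesis using G1[OF assms] by simp
next
  case False
  then have "SS p q a b x2 x1 \<ge> (\<bar>x2\<bar> - \<bar>x1\<bar>)^2/4" using G1[OF assms] by simp
  thus ?thesis using SS_x[of p q a b x1 x2] by (simp add: power2_commute)
qed

lemma G3:
  fixes p q a b x1 x2 :: real
  assumes p: "p \<ge> 0" and q: "q \<ge> 0" and pq: "p + q = 1"
    and bal: "p*a + q*b = 0"
  shows "SS p q a b x1 x2 \<ge> (\<bar>x1\<bar> - \<bar>x2\<bar>)^2/4"
proof (cases "a \<le> b")
  case True
  have "a \<le> 0"
  proof (rule ccontr)
    assume "\<not> a \<le> 0"
    hence "p*a + q*b \<ge> p*a + q*a" using True q by (simp add: mult_left_mono)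
    also have "p*a + q*a = a" using pq by (metis distrib_right mult_1)
    finally show False using bal \<open>\<not> a \<le> 0\<close> by simp
  qed
  moreover have "0 \<le> b"
  proof (rule ccontr)
    assume "\<not> 0 \<le> b"
    hence "p*a + q*b \<le> p*b + q*b" using True p by (simp add: mult_left_mono)
    also have "p*b + q*b = b" using pq by (metis distrib_right mult_1)
    finally show False using bal \<open>\<not> 0 \<le> b\<close> by simp
  qed
  ultimately show ?thesis using G2[OF p q pq _ _ bal] by simp
next
  case False
  have b: "b \<le> 0"
  proof (rule ccontr)
    assume "\<not> b \<le> 0"
    hence "p*a + q*b \<ge> p*b + q*b" using False p by (simp add: mult_left_mono)
    also have "p*b + q*b = b" using pq by (metis distrib_right mult_1)
    finally show False using bal \<open>\<not> b \<le> 0\<close> by simp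
  qed
  moreover have "0 \<le> a"
  proof (rule ccontr)
    assume "\<not> 0 \<le> a"
    hence "p*a + q*b \<le> p*a + q*a" using False q by (simp add: mult_left_mono)
    also have "p*a + q*a = a" using pq by (metis distrib_right mult_1)
    finally show False using bal \<open>\<not> 0 \<le> a\<close> by simp
  qed
  moreover have "q + p = 1" "q*b + p*a = 0" using pq bal by simp_all
  ultimately show ?thesis using G2[of q p b a] SS_pq[of p q a b] p q by simp
qed


theorem claim8:
  fixes M :: "'a measure" and Y1 Y2 :: "'a \<Rightarrow> real" and x1 x2 :: real
  assumes "prob_space M"
    and "Y1 \<in> borel_measurable M" and "Y2 \<in> borel_measurable M"
    and "prob_space.indep_var M borel Y1 borel Y2"
    and "distr M borel Y1 = distr M borel Y2"
    and "integrable M Y1" and "prob_space.expectation M Y1 = 0"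
    and "\<exists>a b. AE \<omega> in M. Y1 \<omega> \<in> {a, b}"
  shows "prob_space.expectation M (\<lambda>\<omega>. (\<bar>x1 + Y1 \<omega>\<bar> - \<bar>x2 + Y2 \<omega>\<bar>)\<^sup>2)
           \<ge> 1/4 * (\<bar>x1\<bar> - \<bar>x2\<bar>)\<^sup>2"
proof -
  interpret P: prob_space M by fact
  note m1[measurable] = assms(2) and m2[measurable] = assms(3)
  obtain a b0 where ab0: "AE \<omega> in M. Y1 \<omega> \<in> {a, b0}" using assms(8) by blast
  define b where "b = (if a = b0 then a + 1 else b0)"
  have ab: "a \<noteq> b" unfolding b_def by auto
  have AE1: "AE \<omega> in M. Y1 \<omega> \<in> {a, b}" using ab0 by eventually_elim (auto simp: b_def)
  define A where "A u = Y1 -` {u} \<inter> space M" for u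
  define B where "B u = Y2 -` {u} \<inter> space M" for u
  have Aev[measurable]: "A u \<in> sets M" for u unfolding A_def by measurable
  have Bev[measurable]: "B u \<in> sets M" for u unfolding B_def by measurable
  have PB: "P.prob (B u) = P.prob (A u)" for u
  proof -
    have "P.prob (A u) = measure (distr M borel Y1) {u}" unfolding A_def
      by (subst measure_distr) auto
    also have "\<dots> = measure (distr M borel Y2) {u}" using assms(5) by simp
    also have "\<dots> = P.prob (B u)" unfolding B_def by (subst measure_distr) auto
    finally show ?thesis by simp
  qed
  define p where "p = P.prob (A a)"
  define q where "q = P.prob (A b)"
  have "P.prob (A a \<union> A b) = 1"
    using AE1 by (subst P.prob_eq_1) (auto simp: A_def elim: AE_mp)
  hence pq: "p + q = 1" unfolding p_def q_def
    using ab by (subst (asm) P.finite_measure_Union) (auto simp: A_def)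
  have "P.prob (B a \<union> B b) = P.prob (B a) + P.prob (B b)"
    using ab by (subst P.finite_measure_Union) (auto simp: B_def)
  hence "P.prob (B a \<union> B b) = 1" using PB pq p_def q_def by simp
  hence AE2: "AE \<omega> in M. \<omega> \<in> B a \<union> B b" by (rule P.AE_prob_1)
  have ints: "integrable M (\<lambda>\<omega>. c * indicator X \<omega>)" if "X \<in> sets M" for c :: real and X
    using that by (intro integrable_mult_right integrable_real_indicator) (auto simp: P.emeasure_eq_measure)
  have "P.expectation Y1 = P.expectation (\<lambda>\<omega>. a * indicator (A a) \<omega> + b * indicator (A b) \<omega>)"
    using AE1 ab by (intro integral_cong_AE) (auto simp: A_def indicator_def elim!: AE_mp)
  also have "\<dots> = a * p + b * q"
    by (subst Bochner_Integration.integral_add[OF ints[OF Aev] ints[OF Aev]]) (auto simp: p_def q_def)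
  finally have bal: "p * a + q * b = 0" using assms(7) by (simp add: algebra_simps)
  have ind: "P.prob (A u \<inter> B v) = P.prob (A u) * P.prob (B v)" for u v
  proof -
    have I: "P.indep_set (sigma_sets (space M) { Y1 -` X \<inter> space M | X. X \<in> sets borel})
      (sigma_sets (space M) { Y2 -` X \<inter> space M | X. X \<in> sets borel})"
      using assms(4) P.indep_var_eq by blast
    show ?thesis unfolding A_def B_def
      by (rule P.indep_setD[OF I]) (intro sigma_sets.Basic CollectI exI[of _ "{_}"], simp)+
  qed
  define f where "f u v = (\<bar>x1 + u\<bar> - \<bar>x2 + v\<bar>)\<^sup>2" for u v
  have "P.expectation (\<lambda>\<omega>. (\<bar>x1 + Y1 \<omega>\<bar> - \<bar>x2 + Y2 \<omega>\<bar>)\<^sup>2) =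
     P.expectation (\<lambda>\<omega>. f a a * indicator (A a \<inter> B a) \<omega> + f a b * indicator (A a \<inter> B b) \<omega>
        + f b a * indicator (A b \<inter> B a) \<omega> + f b b * indicator (A b \<inter> B b) \<omega>)"
    using AE1 AE2 ab by (intro integral_cong_AE) (auto simp: A_def B_def f_def indicator_def elim!: AE_mp)
  also have "\<dots> = f a a * P.prob (A a \<inter> B a) + f a b * P.prob (A a \<inter> B b)
        + f b a * P.prob (A b \<inter> B a) + f b b * P.prob (A b \<inter> B b)"
  proof -
    have i1: "integrable M (\<lambda>\<omega>. f u v * indicator (A u \<inter> B v) \<omega>)" for u v
      by (rule ints) simp
    have i2: "integrable M (\<lambda>\<omega>. f a a * indicator (A a \<inter> B a) \<omega> + f a b * indicator (A a \<inter> B b) \<omega>)"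
      by (intro Bochner_Integration.integrable_add i1)
    have i3: "integrable M (\<lambda>\<omega>. f a a * indicator (A a \<inter> B a) \<omega> + f a b * indicator (A a \<inter> B b) \<omega>
        + f b a * indicator (A b \<inter> B a) \<omega>)"
      by (intro Bochner_Integration.integrable_add i1 i2)
    show ?thesis
      apply (subst Bochner_Integration.integral_add[OF i3 i1])
      apply (subst Bochner_Integration.integral_add[OF i2 i1])
      apply (subst Bochner_Integration.integral_add[OF i1 i1])
      apply simp
      done
  qed
  also have "\<dots> = SS p q a b x1 x2"
    unfolding ind PB SS_def f_def p_def q_def by (simp add: algebra_simps)
  finally have E: "P.expectation (\<lambda>\<omega>. (\<bar>x1 + Y1 \<omega>\<bar> - \<bar>x2 + Y2 \<omega>\<bar>)\<^sup>2) = SS p q a b x1 x2" .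
  have "p \<ge> 0" "q \<ge> 0" unfolding p_def q_def by auto
  from G3[OF this pq bal, of x1 x2] E show ?thesis by simp
qed

end
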